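(* Let $\mathcal{B}=(T,\bowtie)$ be a homogeneous block, let $(T_1,\dots,T_k)$ be a legal partition of $T$ (a partition into $k$ conflict-free sets), and let $\sigma$ be a permutation of $\{1,\dots,k\}$. Let $\mathcal S=\mathrm{LevelSchedule}(T_1,\dots,T_k)$ and $\mathcal S_\sigma=\mathrm{LevelSchedule}(T_{\sigma(1)},\dots,T_{\sigma(k)})$. Then $\mathrm{Lt}_{\mathbb 1}(\mathcal S)\le k$ and $\mathrm{Lt}_{\mathbb 1}(\mathcal S_\sigma)\le k$.
   Context: A block consists of a finite set $T$ of transactions with a symmetric irreflexive conflict relation $\bowtie$; homogeneous means all transactions have the same length, taken to be $1$. A set is conflict-free if no two elements conflict; a legal partition is an ordered sequence of pairwise disjoint conflict-free sets with union $T$. A schedule is $\mathcal S\subseteq T\times T$ with $(T,\mathcal S)$ acyclic; $\mathrm{Lt}_{\mathbb 1}(\mathcal S)$ is the maximum number of vertices on a directed path in $(T,\mathcal S)$. $\mathrm{LevelSchedule}(B_1,\dots,B_k)$: set $B_0=\emptyset$, $\mathcal S=\emptyset$; for $i=1,\dots,k$ and, for each $i$, for $j=i-1,\dots,0$ (decreasing): let $E=\{(u,v)\in B_j\times B_i: u\bowtie v\}$, let $P$ be the set of pairs $(x,y)$ with a directed path from $x$ to $y$ in the current $(T,\mathcal S)$, and set $\mathcal S\leftarrow\mathcal S\cup(E\setminus P)$; output $\mathcal S$. *)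

theory Defs
  imports "HOL-Combinatorics.Permutations"
begin

text \<open>Homogeneity (all lengths equal to 1) is
  reflected in measuring latency by the number of vertices on a path.\<close>
definition block :: "'a set \<Rightarrow> ('a \<Rightarrow> 'a \<Rightarrow> bool) \<Rightarrow> bool" where
  "block T C \<longleftrightarrow> finite T \<and> (\<forall>x\<in>T. \<forall>y\<in>T. C x y \<longrightarrow> C y x) \<and> (\<forall>x\<in>T. \<not> C x x)"

definition conflict_free :: "('a \<Rightarrow> 'a \<Rightarrow> bool) \<Rightarrow> 'a set \<Rightarrow> bool" where
  "conflict_free C A \<longleftrightarrow> (\<forall>x\<in>A. \<forall>y\<in>A. \<not> C x y)"

definition legal_partition :: "'a set \<Rightarrow> ('a \<Rightarrow> 'a \<Rightarrow> bool) \<Rightarrow> nat \<Rightarrow> (nat \<Rightarrow> 'a set) \<Rightarrow> bool" where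
  "legal_partition T C k B \<longleftrightarrow>
     (\<forall>i\<in>{1..k}. conflict_free C (B i)) \<and>
     (\<forall>i\<in>{1..k}. \<forall>j\<in>{1..k}. i \<noteq> j \<longrightarrow> B i \<inter> B j = {}) \<and>
     (\<Union>i\<in>{1..k}. B i) = T"

text \<open>Outer loop i = 1..k, inner
  loop j = i-1 down to 0; P is the set of pairs joined by a (nonempty) directed
  path in the current schedule, i.e. its transitive closure.\<close>
definition level_schedule :: "('a \<Rightarrow> 'a \<Rightarrow> bool) \<Rightarrow> nat \<Rightarrow> (nat \<Rightarrow> 'a set) \<Rightarrow> ('a \<times> 'a) set" where
  "level_schedule C k B =
     (let B0 = (\<lambda>j. if j = 0 then {} else B j) in
      fold (\<lambda>i S. fold (\<lambda>j S. S \<union> ({(u, v). u \<in> B0 j \<and> v \<in> B0 i \<and> C u v} - S\<^sup>+))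
                         (rev [0..<i]) S)
           [1..<Suc k] {})"

definition is_path :: "'a set \<Rightarrow> ('a \<times> 'a) set \<Rightarrow> 'a list \<Rightarrow> bool" where
  "is_path T S xs \<longleftrightarrow> xs \<noteq> [] \<and> distinct xs \<and> set xs \<subseteq> T \<and>
     (\<forall>i. Suc i < length xs \<longrightarrow> (xs ! i, xs ! Suc i) \<in> S)"

definition Lt1 :: "'a set \<Rightarrow> ('a \<times> 'a) set \<Rightarrow> nat" where
  "Lt1 T S = Sup {length xs | xs. is_path T S xs}"

end

theory Submission
  imports Defs
begin

lemma fold_inv:
  assumes "\<And>x S. x \<in> set xs \<Longrightarrow> P S \<Longrightarrow> P (f x S)" and "P S"
  shows "P (fold f xs S)"
  using assms by (induction xs arbitrary: S) auto

lemma ls_sub: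
  "level_schedule C k B \<subseteq> {(u, v). \<exists>i j. 1 \<le> j \<and> j < i \<and> i \<le> k \<and> u \<in> B j \<and> v \<in> B i}"
  (is "_ \<subseteq> ?R")
  unfolding level_schedule_def Let_def
proof (rule fold_inv[where P = "\<lambda>S. S \<subseteq> ?R"])
  fix i S assume i: "i \<in> set [1..<Suc k]" and S: "S \<subseteq> ?R"
  show "fold (\<lambda>j S. S \<union> ({(u, v). u \<in> (if j = 0 then {} else B j) \<and> v \<in> (if i = 0 then {} else B i) \<and> C u v} - S\<^sup>+))
                         (rev [0..<i]) S \<subseteq> ?R"
  proof (rule fold_inv[where P = "\<lambda>S. S \<subseteq> ?R"])
    fix j S' assume j: "j \<in> set (rev [0..<i])" and S': "S' \<subseteq> ?R"
    show "S' \<union> ({(u, v). u \<in> (if j = 0 then {} else B j) \<and> v \<in> (if i = 0 then {} else B i) \<and> C u v} - S'\<^sup>+) \<subseteq> ?R"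
      using i j S' by (auto split: if_splits)
  qed (rule S)
qed simp

lemma gen:
  assumes disj: "\<forall>i\<in>{1..k}. \<forall>j\<in>{1..k}. i \<noteq> j \<longrightarrow> B i \<inter> B j = {}"
    and un: "(\<Union>i\<in>{1..k}. B i) = T"
  shows "Lt1 T (level_schedule C k B) \<le> k"
proof -
  have len: "length xs \<le> k" if p: "is_path T (level_schedule C k B) xs" for xs
  proof -
    let ?n = "length xs"
    have edge: "\<exists>i' j'. 1 \<le> j' \<and> j' < i' \<and> i' \<le> k \<and> xs ! i \<in> B j' \<and> xs ! Suc i \<in> B i'"
      if "Suc i < ?n" for i
      using p that ls_sub[of C k B] unfolding is_path_def by blast
    have "\<forall>i. i < ?n \<longrightarrow> (\<exists>m. xs ! i \<in> B m \<and> i + 1 \<le> m \<and> m \<le> k)"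
    proof
      fix i show "i < ?n \<longrightarrow> (\<exists>m. xs ! i \<in> B m \<and> i + 1 \<le> m \<and> m \<le> k)"
      proof (induction i)
        case 0
        show ?case
        proof
          assume "0 < ?n"
          then have "xs ! 0 \<in> T" using p unfolding is_path_def by auto
          then show "\<exists>m. xs ! 0 \<in> B m \<and> 0 + 1 \<le> m \<and> m \<le> k" using un by auto
        qed
      next
        case (Suc i)
        show ?case
        proof
          assume a: "Suc i < ?n"
          then obtain m where m: "xs ! i \<in> B m" "i + 1 \<le> m" "m \<le> k" using Suc by auto
          obtain i' j' where e: "1 \<le> j'" "j' < i'" "i' \<le> k" "xs ! i \<in> B j'" "xs ! Suc i \<in> B i'"
            using edge[OF a] by blast
          have "m = j'"
          proof (rule ccontr)
            assume "m \<noteq> j'"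
            then have "B m \<inter> B j' = {}" using disj m e by auto
            then show False using m e by auto
          qed
          then show "\<exists>m. xs ! Suc i \<in> B m \<and> Suc i + 1 \<le> m \<and> m \<le> k" using e m by auto
        qed
      qed
    qed
    moreover have "?n \<noteq> 0" using p unfolding is_path_def by auto
    ultimately show ?thesis
      by (metis Suc_pred' add.commute add_le_cancel_left le_trans lessI plus_1_eq_Suc bot_nat_0.not_eq_extremum)
  qed
  show ?thesis
  proof (cases "{length xs |xs. is_path T (level_schedule C k B) xs} = {}")
    case True then show ?thesis unfolding Lt1_def by (metis Sup_nat_def zero_le)
  next
    case False then show ?thesis unfolding Lt1_def by (intro cSup_least) (auto intro: len)
  qed
qed

theorem claim1:
  fixes T :: "'a set" and C :: "'a \<Rightarrow> 'a \<Rightarrow> bool"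
    and k :: nat and B :: "nat \<Rightarrow> 'a set" and \<sigma> :: "nat \<Rightarrow> nat"
  assumes "block T C"
    and "legal_partition T C k B"
    and "\<sigma> permutes {1..k}"
  shows "Lt1 T (level_schedule C k B) \<le> k
       \<and> Lt1 T (level_schedule C k (\<lambda>i. B (\<sigma> i))) \<le> k"
proof
  have d: "\<forall>i\<in>{1..k}. \<forall>j\<in>{1..k}. i \<noteq> j \<longrightarrow> B i \<inter> B j = {}" and u: "(\<Union>i\<in>{1..k}. B i) = T"
    using assms(2) unfolding legal_partition_def by auto
  show "Lt1 T (level_schedule C k B) \<le> k" by (rule gen[OF d u])
  have im: "\<sigma> ` {1..k} = {1..k}" using assms(3) by (rule permutes_image)
  have inj: "inj \<sigma>" using assms(3) by (rule permutes_inj)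
  show "Lt1 T (level_schedule C k (\<lambda>i. B (\<sigma> i))) \<le> k"
  proof (rule gen)
    show "\<forall>i\<in>{1..k}. \<forall>j\<in>{1..k}. i \<noteq> j \<longrightarrow> B (\<sigma> i) \<inter> B (\<sigma> j) = {}"
      proof (intro ballI impI)
      fix i j assume ij: "i \<in> {1..k}" "j \<in> {1..k}" "i \<noteq> j"
      then have "\<sigma> i \<in> {1..k}" "\<sigma> j \<in> {1..k}" "\<sigma> i \<noteq> \<sigma> j"
        using im inj by (auto simp: inj_eq)
      then show "B (\<sigma> i) \<inter> B (\<sigma> j) = {}" using d by blast
    qed
    have "(\<Union>i\<in>{1..k}. B (\<sigma> i)) = \<Union>(B ` \<sigma> ` {1..k})" by (simp add: image_image)
    then show "(\<Union>i\<in>{1..k}. B (\<sigma> i)) = T" using im u by metis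
  qed
qed

end
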